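(* Let $A$ and $B$ be two $n \times n \times n$ alternating sign hypermatrices. Then $A-B$ can be expressed as a sum of T-blocks.
   Context: An $n\times n\times n$ hypermatrix $A=[a_{ijk}]$ has row lines $A_{*jk}=[a_{ijk}: i=1,\dots,n]$, column lines $A_{i*k}=[a_{ijk}: j=1,\dots,n]$ and vertical lines $A_{ij*}=[a_{ijk}: k=1,\dots,n]$. An alternating sign hypermatrix (ASHM) is an $n\times n\times n$ hypermatrix with entries in $\{0,1,-1\}$ such that in every row line, column line and vertical line the non-zero entries alternate in sign, starting and ending with $+1$. For indices $i_1<i_2$, $j_1<j_2$, $k_1<k_2$ in $\{1,\dots,n\}$, the hypermatrix $T_{i_1,j_1,k_1:\,i_2,j_2,k_2}=[t_{ijk}]$ has $t_{ijk}=1$ for $(i,j,k)\in\{(i_1,j_1,k_1),(i_2,j_2,k_1),(i_2,j_1,k_2),(i_1,j_2,k_2)\}$, $t_{ijk}=-1$ for $(i,j,k)\in\{(i_2,j_1,k_1),(i_1,j_2,k_1),(i_1,j_1,k_2),(i_2,j_2,k_2)\}$, and $t_{ijk}=0$ otherwise. A T-block is a hypermatrix of the form $T_{i_1,j_1,k_1:\,i_2,j_2,k_2}$ or $-T_{i_1,j_1,k_1:\,i_2,j_2,k_2}$. *)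

theory Defs
  imports Main
begin

text \<open>An n x n x n hypermatrix is modelled as a function nat => nat => nat => int;
  only the entries with indices in {1..n} are relevant.\<close>
type_synonym hypermatrix = "nat \<Rightarrow> nat \<Rightarrow> nat \<Rightarrow> int"

definition alternating_pm :: "int list \<Rightarrow> bool" where
  "alternating_pm xs \<longleftrightarrow> xs \<noteq> [] \<and> hd xs = 1 \<and> last xs = 1 \<and>
     (\<forall>i. Suc i < length xs \<longrightarrow> xs ! Suc i = - (xs ! i))"

definition alt_line :: "nat \<Rightarrow> (nat \<Rightarrow> int) \<Rightarrow> bool" where
  "alt_line n a \<longleftrightarrow> alternating_pm (filter (\<lambda>x. x \<noteq> 0) (map a [1..<Suc n]))"

definition ASHM :: "nat \<Rightarrow> hypermatrix \<Rightarrow> bool" where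
  "ASHM n A \<longleftrightarrow>
     (\<forall>i\<in>{1..n}. \<forall>j\<in>{1..n}. \<forall>k\<in>{1..n}. A i j k \<in> {0, 1, -1}) \<and>
     (\<forall>j\<in>{1..n}. \<forall>k\<in>{1..n}. alt_line n (\<lambda>i. A i j k)) \<and>
     (\<forall>i\<in>{1..n}. \<forall>k\<in>{1..n}. alt_line n (\<lambda>j. A i j k)) \<and>
     (\<forall>i\<in>{1..n}. \<forall>j\<in>{1..n}. alt_line n (\<lambda>k. A i j k))"

definition Tblock :: "nat \<Rightarrow> nat \<Rightarrow> nat \<Rightarrow> nat \<Rightarrow> nat \<Rightarrow> nat \<Rightarrow> hypermatrix" where
  "Tblock i1 j1 k1 i2 j2 k2 = (\<lambda>i j k.
     if (i, j, k) \<in> {(i1,j1,k1), (i2,j2,k1), (i2,j1,k2), (i1,j2,k2)} then 1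
     else if (i, j, k) \<in> {(i2,j1,k1), (i1,j2,k1), (i1,j1,k2), (i2,j2,k2)} then -1
     else 0)"

definition is_Tblock :: "nat \<Rightarrow> hypermatrix \<Rightarrow> bool" where
  "is_Tblock n M \<longleftrightarrow> (\<exists>i1 j1 k1 i2 j2 k2 s.
     1 \<le> i1 \<and> i1 < i2 \<and> i2 \<le> n \<and> 1 \<le> j1 \<and> j1 < j2 \<and> j2 \<le> n \<and>
     1 \<le> k1 \<and> k1 < k2 \<and> k2 \<le> n \<and> s \<in> {1, -1} \<and>
     M = (\<lambda>i j k. s * Tblock i1 j1 k1 i2 j2 k2 i j k))"

end

theory Submission
  imports Defs
begin

lemma alt_sum2: "xs \<noteq> [] \<Longrightarrow> (\<forall>i. Suc i < length xs \<longrightarrow> xs ! Suc i = - (xs ! i)) \<Longrightarrow>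
  2 * sum_list xs = hd xs + last (xs::int list)"
proof (induction xs)
  case Nil then show ?case by simp
next
  case (Cons x xs)
  show ?case
  proof (cases "xs = []")
    case True then show ?thesis by simp
  next
    case False
    have h: "\<forall>i. Suc i < length xs \<longrightarrow> xs ! Suc i = - (xs ! i)"
    proof (intro allI impI)
      fix i assume "Suc i < length xs"
      then show "xs ! Suc i = - (xs ! i)" using Cons.prems(2) by (metis Suc_less_eq length_Cons nth_Cons_Suc)
    qed
    have "hd xs = - x" using Cons.prems(2) False
      by (metis hd_conv_nth length_Cons length_greater_0_conv nth_Cons_0 nth_Cons_Suc zero_less_Suc Suc_less_eq)
    then show ?thesis using Cons.IH[OF False h] False by simp
  qed
qed

lemma alt_sum: "alternating_pm xs \<Longrightarrow> sum_list xs = 1"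
  using alt_sum2[of xs] unfolding alternating_pm_def by auto

lemma sum_filter_nz: "sum_list (filter (\<lambda>x. x \<noteq> 0) ys) = sum_list (ys::int list)"
  by (induction ys) auto

lemma line_sum: "alt_line n a \<Longrightarrow> sum a {1..n} = 1"
proof -
  assume "alt_line n a"
  then have "sum_list (map a [1..<Suc n]) = 1"
    unfolding alt_line_def using alt_sum sum_filter_nz by metis
  moreover have "sum a {1..n} = sum_list (map a [1..<Suc n])"
    by (metis atLeastLessThanSuc_atLeastAtMost set_upt sum_set_upt_conv_sum_list_nat)
  ultimately show ?thesis by simp
qed

lemma sl_concat: "sum_list (map f (concat xss)) = sum_list (map (\<lambda>xs. sum_list (map f xs)) xss)"
  for f :: "'a \<Rightarrow> int"
  by (induction xss) auto

definition ee :: "nat \<Rightarrow> nat \<Rightarrow> nat \<Rightarrow> int" where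
  "ee n a i = (if a = n then -1 else if a = i then 1 else 0)"

lemma L: fixes g :: "nat \<Rightarrow> int"
  assumes "a \<in> {1..n}" "sum g {1..n} = 0"
  shows "(\<Sum>i\<in>{1..<n}. ee n a i * g i) = g a"
proof (cases "a = n")
  case True
  have e: "{1..n} = insert n {1..<n}" using assms(1) by auto
  have "sum g {1..n} = sum g {1..<n} + g n" unfolding e by simp
  then show ?thesis using True assms by (simp add: ee_def sum_negf)
next
  case False
  then have "a \<in> {1..<n}" using assms(1) by auto
  have "(\<Sum>i\<in>{1..<n}. ee n a i * g i) = (\<Sum>i\<in>{1..<n}. if i = a then g i else 0)"
    by (intro sum.cong refl) (auto simp: ee_def False)
  also have "\<dots> = g a" using \<open>a \<in> {1..<n}\<close> by (simp add: sum.delta)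
  finally show ?thesis .
qed

lemma Tfac: assumes "i < n" "j < n" "k < n"
  shows "Tblock i j k n n n a b c = ee n a i * ee n b j * ee n c k"
  using assms unfolding Tblock_def ee_def
  by (cases "a = n"; cases "b = n"; cases "c = n"; cases "a = i"; cases "b = j"; cases "c = k") simp_all

lemma main:
  fixes D :: hypermatrix
  assumes l1: "\<And>j k. j \<in> {1..n} \<Longrightarrow> k \<in> {1..n} \<Longrightarrow> sum (\<lambda>i. D i j k) {1..n} = 0"
    and l2: "\<And>i k. i \<in> {1..n} \<Longrightarrow> k \<in> {1..n} \<Longrightarrow> sum (\<lambda>j. D i j k) {1..n} = 0"
    and l3: "\<And>i j. i \<in> {1..n} \<Longrightarrow> j \<in> {1..n} \<Longrightarrow> sum (\<lambda>k. D i j k) {1..n} = 0"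
  shows "\<exists>Ts :: hypermatrix list. (\<forall>M\<in>set Ts. is_Tblock n M) \<and>
           (\<forall>i\<in>{1..n}. \<forall>j\<in>{1..n}. \<forall>k\<in>{1..n}.
              D i j k = (\<Sum>M\<leftarrow>Ts. M i j k))"
proof -
  define blk where "blk = (\<lambda>i j k. replicate (nat \<bar>D i j k\<bar>)
      (\<lambda>a b c. sgn (D i j k) * Tblock i j k n n n a b c))"
  define Ts where "Ts = concat (map (\<lambda>i. concat (map (\<lambda>j. concat (map (\<lambda>k. blk i j k)
      [1..<n])) [1..<n])) [1..<n])"
  have "\<forall>M\<in>set Ts. is_Tblock n M"
  proof
    fix M assume "M \<in> set Ts"
    then obtain i j k where ijk: "i \<in> {1..<n}" "j \<in> {1..<n}" "k \<in> {1..<n}" "M \<in> set (blk i j k)"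
      unfolding Ts_def by auto
    then have "D i j k \<noteq> 0" and M: "M = (\<lambda>a b c. sgn (D i j k) * Tblock i j k n n n a b c)"
      unfolding blk_def by (auto split: if_splits)
    then have s: "sgn (D i j k) \<in> {1, -1}" by (simp add: sgn_if)
    have "1 \<le> i \<and> i < n \<and> n \<le> n \<and> 1 \<le> j \<and> j < n \<and> n \<le> n \<and>
     1 \<le> k \<and> k < n \<and> n \<le> n \<and> sgn (D i j k) \<in> {1, -1} \<and>
     M = (\<lambda>a b c. sgn (D i j k) * Tblock i j k n n n a b c)" using ijk s M by simp
    then show "is_Tblock n M" unfolding is_Tblock_def by blast
  qed
  moreover have "\<forall>a\<in>{1..n}. \<forall>b\<in>{1..n}. \<forall>c\<in>{1..n}. D a b c = (\<Sum>M\<leftarrow>Ts. M a b c)"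
  proof (intro ballI)
    fix a b c assume abc: "a \<in> {1..n}" "b \<in> {1..n}" "c \<in> {1..n}"
    have blk: "(\<Sum>M\<leftarrow>blk i j k. M a b c) = D i j k * Tblock i j k n n n a b c" for i j k
      unfolding blk_def by (simp add: sum_list_replicate abs_mult_sgn mult.assoc[symmetric])
    have "(\<Sum>M\<leftarrow>Ts. M a b c) = (\<Sum>i\<in>{1..<n}. \<Sum>j\<in>{1..<n}. \<Sum>k\<in>{1..<n}.
        D i j k * Tblock i j k n n n a b c)"
      unfolding Ts_def by (simp add: sl_concat o_def blk sum_set_upt_conv_sum_list_nat[symmetric])
    also have "\<dots> = (\<Sum>i\<in>{1..<n}. ee n a i * (\<Sum>j\<in>{1..<n}. ee n b j * (\<Sum>k\<in>{1..<n}.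
        ee n c k * D i j k)))"
      by (intro sum.cong refl) (simp add: Tfac sum_distrib_left mult_ac)
    also have "\<dots> = (\<Sum>i\<in>{1..<n}. ee n a i * (\<Sum>j\<in>{1..<n}. ee n b j * D i j c))"
      by (intro sum.cong refl arg_cong2[where f="(*)"] L abc l3) auto
    also have "\<dots> = (\<Sum>i\<in>{1..<n}. ee n a i * D i b c)"
      by (intro sum.cong refl arg_cong2[where f="(*)"] L abc l2) auto
    also have "\<dots> = D a b c"
      by (intro L abc l1)
    finally show "D a b c = (\<Sum>M\<leftarrow>Ts. M a b c)" by simp
  qed
  ultimately show ?thesis by blast
qed

theorem lemma2p3:
  fixes n :: nat and A B :: hypermatrix
  assumes "ASHM n A" and "ASHM n B"
  shows "\<exists>Ts :: hypermatrix list. (\<forall>M\<in>set Ts. is_Tblock n M) \<and>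
           (\<forall>i\<in>{1..n}. \<forall>j\<in>{1..n}. \<forall>k\<in>{1..n}.
              A i j k - B i j k = (\<Sum>M\<leftarrow>Ts. M i j k))"
proof -
  have a: "ASHM n A" and b: "ASHM n B" by fact+
  show ?thesis
  proof (rule main[where D="\<lambda>i j k. A i j k - B i j k"])
    fix j k assume h: "j \<in> {1..n}" "k \<in> {1..n}"
    have "alt_line n (\<lambda>i. A i j k)" "alt_line n (\<lambda>i. B i j k)"
      using a b h unfolding ASHM_def by blast+
    then have "sum (\<lambda>x. A x j k) {1..n} = 1" "sum (\<lambda>x. B x j k) {1..n} = 1" using line_sum by blast+
    then show "(\<Sum>i\<in>{1..n}. A i j k - B i j k) = 0"
      by (simp add: sum_subtractf)
  next
    fix i k assume h: "i \<in> {1..n}" "k \<in> {1..n}"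
    have "alt_line n (\<lambda>j. A i j k)" "alt_line n (\<lambda>j. B i j k)"
      using a b h unfolding ASHM_def by blast+
    then have "sum (\<lambda>x. A i x k) {1..n} = 1" "sum (\<lambda>x. B i x k) {1..n} = 1" using line_sum by blast+
    then show "(\<Sum>j\<in>{1..n}. A i j k - B i j k) = 0"
      by (simp add: sum_subtractf)
  next
    fix i j assume h: "i \<in> {1..n}" "j \<in> {1..n}"
    have "alt_line n (\<lambda>k. A i j k)" "alt_line n (\<lambda>k. B i j k)"
      using a b h unfolding ASHM_def by blast+
    then have "sum (\<lambda>x. A i j x) {1..n} = 1" "sum (\<lambda>x. B i j x) {1..n} = 1" using line_sum by blast+
    then show "(\<Sum>k\<in>{1..n}. A i j k - B i j k) = 0"
      by (simp add: sum_subtractf)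
  qed
qed

end
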